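(* Assume the target tube $\mathscr{T}_N$ is closed, $\mathcal{U}$ is compact, and each $f_k$ is continuous on $\mathcal{X}\times\mathcal{U}$. Let $\alpha\in[0,1]$, $k\in\mathbb{N}_{[0,N-1]}$, and let $\mathcal{E}\subseteq\mathcal{W}$ be a measurable set with $\mathbb{P}_w(w_t\in\mathcal{E})=\alpha^{1/(N-k)}$ for all $t\in\mathbb{N}_{[k,N-1]}$. Then $\mathcal{R}_k(\mathscr{T}_N,\mathcal{E})\subseteq\mathcal{L}_k(\alpha)$.
   Context: Fix $N\in\mathbb{N}$, $N>0$, and write $\mathbb{N}_{[a,b]}=\{a,a+1,\dots,b\}$. Consider the discrete-time system $x_{k+1}=f_k(x_k,u_k)+w_k$, $k=0,\dots,N-1$, with state $x_k\in\mathcal{X}\subseteq\mathbb{R}^n$, input $u_k\in\mathcal{U}\subseteq\mathbb{R}^m$, disturbance $w_k\in\mathcal{W}\subseteq\mathbb{R}^n$ with $0\in\mathcal{W}$, and $f_k:\mathcal{X}\times\mathcal{U}\to\mathcal{X}$. A target tube is a sequence $\mathscr{T}_N=[\mathcal{T}_0,\dots,\mathcal{T}_N]$ of subsets of $\mathcal{X}$; it is called closed (resp. convex) if every $\mathcal{T}_k$ is closed (resp. convex). In the stochastic setting, $w_0,\dots,w_{N-1}$ are i.i.d. random vectors with an absolutely continuous distribution $\mathbb{P}_w$ on $\mathcal{W}$. A Markov policy is a tuple $\pi=[\mu_0,\dots,\mu_{N-1}]$ of universally measurable maps $\mu_k:\mathcal{X}\to\mathcal{U}$; $\mathcal{M}$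 denotes the set of Markov policies. For $\pi\in\mathcal{M}$ and $x_k=y$, $\mathbb{P}^\pi_k(\cdot\,|\,y)$ denotes the probability law of $(x_{k+1},\dots,x_N)$ generated by $x_{t+1}=f_t(x_t,\mu_t(x_t))+w_t$. The stochastic $\alpha$-level reach set is $\mathcal{L}_k(\alpha)=\{y\in\mathcal{T}_k:\sup_{\pi\in\mathcal{M}}\mathbb{P}^\pi_k(\bigcap_{t=k+1}^N\{x_t\in\mathcal{T}_t\}\,|\,y)\ge\alpha\}$. For $\mathcal{E}\subseteq\mathcal{W}$ and $k\in\mathbb{N}_{[0,N-1]}$, the disturbance minimal reach set $\mathcal{R}_k(\mathscr{T}_N,\mathcal{E})$ is the set of $x_k\in\mathcal{T}_k$ for which there exist state-feedback laws $\nu_t:\mathcal{X}\to\mathcal{U}$, $t\in\mathbb{N}_{[k,N-1]}$ (no measurability required), such that for every disturbance sequence $w_k,\dots,w_{N-1}\in\mathcal{E}$ the trajectory $x_{t+1}=f_t(x_t,\nu_t(x_t))+w_t$ satisfies $x_t\in\mathcal{T}_t$ for all $t\in\mathbb{N}_{[k+1,N]}$; also $\mathcal{R}_N(\mathscr{T}_N,\mathcal{E})=\mathcal{T}_N$. *)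

theory Defs
  imports "HOL-Probability.Probability"
begin

definition univ_measurable_on ::
  "'a::topological_space set \<Rightarrow> ('a \<Rightarrow> 'b::topological_space) \<Rightarrow> bool" where
  "univ_measurable_on X g \<longleftrightarrow>
     (\<forall>M. prob_space M \<longrightarrow> sets M = sets (restrict_space borel X) \<longrightarrow>
          g \<in> completion M \<rightarrow>\<^sub>M borel)"

definition markov_policies ::
  "nat \<Rightarrow> 'a::topological_space set \<Rightarrow> 'b::topological_space set \<Rightarrow> (nat \<Rightarrow> 'a \<Rightarrow> 'b) set" where
  "markov_policies N X U =
     {\<pi>. \<forall>t<N. (\<forall>x\<in>X. \<pi> t x \<in> U) \<and> univ_measurable_on X (\<pi> t)}"

text \<open>Closed-loop trajectory started at x_k = y: traj f pol k y w j = x_(k+j),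
  with x_(t+1) = f t x_t (pol t x_t) + w t.\<close>
fun traj :: "(nat \<Rightarrow> 'a::plus \<Rightarrow> 'b \<Rightarrow> 'a) \<Rightarrow> (nat \<Rightarrow> 'a \<Rightarrow> 'b) \<Rightarrow> nat \<Rightarrow> 'a \<Rightarrow> (nat \<Rightarrow> 'a) \<Rightarrow> nat \<Rightarrow> 'a" where
  "traj f pol k y w 0 = y"
| "traj f pol k y w (Suc j) =
     f (k + j) (traj f pol k y w j) (pol (k + j) (traj f pol k y w j)) + w (k + j)"

text \<open>P^pi_k( x_t in T_t for all t in k+1..N | x_k = y ): the disturbances w_k..w_(N-1)
  are i.i.d. with law Pw (product measure), the event is measured in the completion.\<close>
definition reach_prob ::
  "(nat \<Rightarrow> 'a::{plus,topological_space} \<Rightarrow> 'b \<Rightarrow> 'a) \<Rightarrow> (nat \<Rightarrow> 'a \<Rightarrow> 'b) \<Rightarrow> nat \<Rightarrow> (nat \<Rightarrow> 'a set)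
    \<Rightarrow> 'a measure \<Rightarrow> nat \<Rightarrow> 'a \<Rightarrow> real" where
  "reach_prob f pol N T Pw k y =
     measure (completion (PiM {k..<N} (\<lambda>_. Pw)))
       {\<omega> \<in> space (PiM {k..<N} (\<lambda>_. Pw)). \<forall>j\<in>{1..N-k}. traj f pol k y \<omega> j \<in> T (k + j)}"

definition stoch_reach_set ::
  "(nat \<Rightarrow> 'a::{plus,topological_space} \<Rightarrow> 'b::topological_space \<Rightarrow> 'a) \<Rightarrow> 'a set \<Rightarrow> 'b set \<Rightarrow> nat
    \<Rightarrow> (nat \<Rightarrow> 'a set) \<Rightarrow> 'a measure \<Rightarrow> nat \<Rightarrow> real \<Rightarrow> 'a set" where
  "stoch_reach_set f X U N T Pw k \<alpha> =
     {y \<in> T k. (SUP pol\<in>markov_policies N X U. reach_prob f pol N T Pw k y) \<ge> \<alpha>}"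

text \<open>Disturbance minimal reach set R_k(T, E) (no measurability on the feedback laws).\<close>
definition min_reach_set ::
  "(nat \<Rightarrow> 'a::plus \<Rightarrow> 'b \<Rightarrow> 'a) \<Rightarrow> 'a set \<Rightarrow> 'b set \<Rightarrow> nat \<Rightarrow> (nat \<Rightarrow> 'a set) \<Rightarrow> 'a set
    \<Rightarrow> nat \<Rightarrow> 'a set" where
  "min_reach_set f X U N T E k =
     (if k = N then T N else
      {x \<in> T k. \<exists>\<nu>. (\<forall>t\<in>{k..<N}. \<forall>z\<in>X. \<nu> t z \<in> U) \<and>
         (\<forall>w. (\<forall>t\<in>{k..<N}. w t \<in> E) \<longrightarrow> (\<forall>j\<in>{1..N-k}. traj f \<nu> k x w j \<in> T (k + j)))})"

end

theory Submission
  imports Defs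
begin


definition Aset :: "('a::metric_space \<times> 'b::metric_space) set \<Rightarrow> real \<Rightarrow> 'b \<Rightarrow> 'a set" where
  "Aset G r c = {x. \<exists>u. (x,u)\<in>G \<and> dist c u \<le> r}"

primrec gs :: "(nat \<Rightarrow> 'b::metric_space) \<Rightarrow> ('a::metric_space \<times> 'b) set \<Rightarrow> nat \<Rightarrow> 'a \<Rightarrow> 'b" where
  "gs d G 0 x = d (LEAST n. x \<in> Aset G 1 (d n))"
| "gs d G (Suc j) x = d (LEAST n. x \<in> Aset G ((1/2)^Suc j) (d n) \<and> dist (d n) (gs d G j x) < 2*(1/2)^j)"

lemma Aset_closed:
  fixes G :: "('a::euclidean_space \<times> 'b::euclidean_space) set"
  assumes "closed G" "compact U" "G \<subseteq> UNIV \<times> U"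
  shows "closed (Aset G r c)"
proof -
  let ?T = "(\<lambda>p. (snd p, fst p)) -` G \<inter> {p. dist c (fst p) \<le> r}"
  have "closed ((\<lambda>p. (snd p, fst p)) -` G)"
    by (intro continuous_closed_vimage assms(1)) (auto intro!: continuous_intros)
  moreover have "closed {p::'b\<times>'a. dist c (fst p) \<le> r}"
    by (intro closed_Collect_le) (auto intro!: continuous_intros)
  ultimately have "closed ?T" by blast
  hence "closed {y. \<exists>x. x \<in> U \<and> (x, y) \<in> ?T}" by (rule closed_compact_projection[OF assms(2)])
  moreover have "{y. \<exists>x. x \<in> U \<and> (x, y) \<in> ?T} = Aset G r c"
    using assms(3) unfolding Aset_def by auto
  ultimately show ?thesis by simp
qed

lemma gs_meas:
  fixes G :: "('a::euclidean_space \<times> 'b::euclidean_space) set"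
  assumes "closed G" "compact U" "G \<subseteq> UNIV \<times> U"
  shows "gs d G j \<in> borel_measurable borel"
proof -
  have A[measurable]: "Measurable.pred borel (\<lambda>x. x \<in> Aset G r c)" for r c
    using Aset_closed[OF assms] unfolding pred_def by auto
  have d[measurable]: "(\<lambda>n. d n) \<in> count_space UNIV \<rightarrow>\<^sub>M borel" by simp
  show ?thesis
  proof (induction j)
    case 0
    show ?case by simp
  next
    case (Suc j)
    note [measurable] = Suc
    show ?case by simp
  qed
qed

lemma selector:
  fixes G :: "('a::euclidean_space \<times> 'b::euclidean_space) set"
  assumes "closed G" "compact U" "G \<subseteq> UNIV \<times> U"
  shows "\<exists>g. g \<in> borel_measurable borel \<and> (\<forall>x \<in> fst ` G. (x, g x) \<in> G)"
proof -
  obtain D :: "'b set" where D: "countable D" "\<And>Y. open Y \<Longrightarrow> Y \<noteq> {} \<Longrightarrow> \<exists>d\<in>D. d\<in>Y"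
    by (erule countable_dense_setE)
  define d where "d = from_nat_into D"
  have dense: "\<exists>n. dist (d n) u < e" if epos: "e > 0" for u e
  proof -
    obtain c where c: "c \<in> D" "c \<in> ball u e" using D(2)[of "ball u e"] epos by force
    then have "d (to_nat_on D c) = c" using D(1) unfolding d_def by (simp add: from_nat_into_to_nat_on)
    then show ?thesis using c by (metis dist_commute mem_ball)
  qed
  define r where "r j = (1/2::real)^j" for j
  have rpos: "r j > 0" for j by (simp add: r_def)
  have rSuc: "r (Suc j) = r j / 2" for j by (simp add: r_def)
  have ex_step: "\<exists>n. x \<in> Aset G ((1/2)^Suc j) (d n) \<and> dist (d n) (gs d G j x) < 2*(1/2)^j"
    if xA: "x \<in> Aset G (r j) (gs d G j x)" for x j
  proof -
    obtain u where u: "(x,u) \<in> G" "dist (gs d G j x) u \<le> r j" using xA unfolding Aset_def by auto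
    obtain n where n: "dist (d n) u < r (Suc j)" using dense[of "r (Suc j)" u] rpos by auto
    have "dist (d n) (gs d G j x) \<le> dist (d n) u + dist (gs d G j x) u" by (rule dist_triangle2)
    also have "\<dots> < r (Suc j) + r j" using n u by simp
    also have "\<dots> \<le> 2 * r j" using rSuc[of j] rpos[of j] by simp
    finally have "dist (d n) (gs d G j x) < 2 * (1/2)^j" by (simp add: r_def)
    moreover have "x \<in> Aset G ((1/2)^Suc j) (d n)" using u n unfolding Aset_def r_def by force
    ultimately show ?thesis by blast
  qed
  have inv: "x \<in> Aset G (r j) (gs d G j x)" if xG: "x \<in> fst ` G" for x j
  proof (induction j)
    case 0
    obtain u where u: "(x,u) \<in> G" using xG by force
    obtain n where "dist (d n) u < 1" using dense[of 1 u] by auto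
    hence "\<exists>n. x \<in> Aset G 1 (d n)" using u unfolding Aset_def by (intro exI[of _ n]) auto
    from LeastI_ex[OF this] show ?case by (simp add: r_def)
  next
    case (Suc j)
    from LeastI_ex[OF ex_step[OF Suc]] show ?case by (simp add: r_def)
  qed
  have step: "dist (gs d G (Suc j) x) (gs d G j x) \<le> 2 * r j" if "x \<in> fst ` G" for x j
    using LeastI_ex[OF ex_step[OF inv[OF that, of j]]] by (simp add: r_def less_imp_le)
  have cau: "dist (gs d G m x) (gs d G n x) \<le> 4 * (r m - r n)" if "x \<in> fst ` G" "m \<le> n" for x m n
    using that(2)
  proof (induction n rule: dec_induct)
    case base
    then show ?case by simp
  next
    case (step n)
    have "dist (gs d G m x) (gs d G (Suc n) x) \<le> dist (gs d G m x) (gs d G n x) + dist (gs d G (Suc n) x) (gs d G n x)"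
      by (rule dist_triangle2)
    also have "\<dots> \<le> 4 * (r m - r n) + 2 * r n" using step.IH \<open>x \<in> fst ` G\<close> step by (meson add_mono \<open>\<And>x j. x \<in> fst ` G \<Longrightarrow> dist (gs d G (Suc j) x) (gs d G j x) \<le> 2 * r j\<close>)
    also have "\<dots> = 4 * (r m - r (Suc n))" using rSuc[of n] by simp
    finally show ?case .
  qed
  have rmono: "r n \<le> r m" if "m \<le> n" for m n
    unfolding r_def using that by (simp add: power_decreasing)
  have Cau: "Cauchy (\<lambda>j. gs d G j x)" if x: "x \<in> fst ` G" for x
  proof (rule metric_CauchyI)
    fix e :: real assume e: "e > 0"
    obtain M where M: "(1/2::real)^M < e/4" using real_arch_pow_inv[of "e/4" "1/2::real"] e by auto
    show "\<exists>M. \<forall>m\<ge>M. \<forall>n\<ge>M. dist (gs d G m x) (gs d G n x) < e"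
    proof (intro exI allI impI)
      fix m n assume mn: "M \<le> m" "M \<le> n"
      show "dist (gs d G m x) (gs d G n x) < e"
      proof (cases "m \<le> n")
        case True
        have "dist (gs d G m x) (gs d G n x) \<le> 4 * (r m - r n)" by (rule cau[OF x True])
        also have "\<dots> \<le> 4 * r M" using rmono[OF mn(1)] rpos[of n] by simp
        also have "\<dots> < e" using M by (simp add: r_def)
        finally show ?thesis .
      next
        case False
        have "dist (gs d G m x) (gs d G n x) = dist (gs d G n x) (gs d G m x)" by (simp add: dist_commute)
        also have "\<dots> \<le> 4 * (r n - r m)" using False by (intro cau[OF x]) simp
        also have "\<dots> \<le> 4 * r M" using rmono[OF mn(2)] rpos[of m] by simp
        also have "\<dots> < e" using M by (simp add: r_def)
        finally show ?thesis .
      qed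
    qed
  qed
  define g where "g x = lim (\<lambda>j. gs d G j x)" for x
  have gm: "g \<in> borel_measurable borel"
    unfolding g_def by (intro borel_measurable_lim_metric gs_meas[OF assms])
  have "(x, g x) \<in> G" if x: "x \<in> fst ` G" for x
  proof -
    have lim: "(\<lambda>j. gs d G j x) \<longlonglongrightarrow> g x"
      unfolding g_def using Cau[OF x] by (simp add: Cauchy_convergent_iff convergent_LIMSEQ_iff)
    have "\<forall>j. \<exists>u. (x,u) \<in> G \<and> dist (gs d G j x) u \<le> r j" using inv[OF x] unfolding Aset_def by auto
    then obtain u where u: "\<And>j. (x, u j) \<in> G" "\<And>j. dist (gs d G j x) (u j) \<le> r j" by metis
    have r0: "r \<longlonglongrightarrow> 0" unfolding r_def by (intro LIMSEQ_realpow_zero) auto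
    have "(\<lambda>j. u j - gs d G j x) \<longlonglongrightarrow> 0"
      by (rule Lim_null_comparison[OF _ r0]) (use u(2) in \<open>auto simp: dist_norm norm_minus_commute\<close>)
    hence "u \<longlonglongrightarrow> g x" using Lim_transform[OF lim] by blast
    hence "(\<lambda>j. (x, u j)) \<longlonglongrightarrow> (x, g x)" by (intro tendsto_Pair) auto
    then show ?thesis using closed_sequentially[OF assms(1), of "\<lambda>j. (x, u j)"] u(1) by blast
  qed
  then show ?thesis using gm by blast
qed



primrec Rb :: "(nat \<Rightarrow> 'a::plus \<Rightarrow> 'b \<Rightarrow> 'a) \<Rightarrow> 'b set \<Rightarrow> nat \<Rightarrow> (nat \<Rightarrow> 'a set) \<Rightarrow> 'a set \<Rightarrow> nat \<Rightarrow> 'a set" where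
  "Rb f U N T E 0 = T N"
| "Rb f U N T E (Suc m) = {x \<in> T (N - Suc m). \<exists>u\<in>U. \<forall>e\<in>E. f (N - Suc m) x u + e \<in> Rb f U N T E m}"

lemma traj_shift:
  "traj f \<nu> t x w (Suc j) = traj f \<nu> (Suc t) (f t x (\<nu> t x) + w t) w j"
  by (induction j) simp_all

lemma traj_cong_w:
  "(\<forall>s\<ge>k. w s = w' s) \<Longrightarrow> traj f \<nu> k y w j = traj f \<nu> k y w' j"
  by (induction j) simp_all

lemma Rb_sub: "Rb f U N T E m \<subseteq> T (N - m)"
  by (cases m) auto

lemma minreach_Rb:
  assumes TX: "\<forall>t\<le>N. T t \<subseteq> X"
  shows "m \<le> N \<Longrightarrow> x \<in> T (N-m) \<Longrightarrow> (\<forall>s\<in>{N-m..<N}. \<forall>z\<in>X. \<nu> s z \<in> U) \<Longrightarrow>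
    (\<forall>w. (\<forall>s\<in>{N-m..<N}. w s \<in> E) \<longrightarrow> (\<forall>j\<in>{1..m}. traj f \<nu> (N-m) x w j \<in> T (N-m+j)))
    \<Longrightarrow> x \<in> Rb f U N T E m"
proof (induction m arbitrary: x)
  case 0
  then show ?case by simp
next
  case (Suc m)
  define t where "t = N - Suc m"
  have t: "t < N" "Suc t = N - m" using Suc.prems(1) unfolding t_def by auto
  have "N - Suc m \<le> N" by simp
  hence xX: "x \<in> X" using Suc.prems(2) TX unfolding t_def by blast
  have uU: "\<nu> t x \<in> U" using Suc.prems(3) xX t by auto
  have "\<forall>e\<in>E. f t x (\<nu> t x) + e \<in> Rb f U N T E m"
  proof
    fix e assume e: "e \<in> E"
    let ?y = "f t x (\<nu> t x) + e"
    have "traj f \<nu> t x (\<lambda>_. e) 1 \<in> T (t + 1)"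
      using Suc.prems(4)[rule_format, of "\<lambda>_. e" 1] e t unfolding t_def by auto
    hence yT: "?y \<in> T (N - m)" using t by simp
    show "?y \<in> Rb f U N T E m"
    proof (rule Suc.IH)
      show "m \<le> N" using Suc.prems(1) by simp
      show "?y \<in> T (N - m)" by fact
      show "\<forall>s\<in>{N - m..<N}. \<forall>z\<in>X. \<nu> s z \<in> U" using Suc.prems(3) by auto
      show "\<forall>w. (\<forall>s\<in>{N - m..<N}. w s \<in> E) \<longrightarrow> (\<forall>j\<in>{1..m}. traj f \<nu> (N - m) ?y w j \<in> T (N - m + j))"
      proof (intro allI impI ballI)
        fix w' j assume w': "\<forall>s\<in>{N - m..<N}. w' s \<in> E" and j: "j \<in> {1..m}"
        define w where "w = w'(t := e)"
        have ww: "\<forall>s\<in>{t..<N}. w s \<in> E" using w' e t unfolding w_def by auto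
        have "traj f \<nu> t x w (Suc j) \<in> T (t + Suc j)"
          using Suc.prems(4)[rule_format, of w "Suc j"] ww j unfolding t_def by auto
        moreover have "traj f \<nu> t x w (Suc j) = traj f \<nu> (N - m) ?y w' j"
          unfolding traj_shift using t by (auto simp: w_def intro!: traj_cong_w)
        moreover have "t + Suc j = N - m + j" using t Suc.prems(1) by linarith
        hence "T (t + Suc j) = T (N - m + j)" by (rule arg_cong)
        ultimately show "traj f \<nu> (N - m) ?y w' j \<in> T (N - m + j)" by metis
      qed
    qed
  qed
  then show ?case using Suc.prems(2) uU unfolding t_def by auto
qed

lemma proj_closed:
  fixes G :: "('a::euclidean_space \<times> 'b::euclidean_space) set"
  assumes "closed G" "compact U" "G \<subseteq> UNIV \<times> U"
  shows "closed (fst ` G)"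
proof -
  let ?T = "(\<lambda>p. (snd p, fst p)) -` G"
  have "closed ?T"
    by (intro continuous_closed_vimage assms(1)) (auto intro!: continuous_intros)
  hence "closed {y. \<exists>x. x \<in> U \<and> (x, y) \<in> ?T}" by (rule closed_compact_projection[OF assms(2)])
  moreover have "{y. \<exists>x. x \<in> U \<and> (x, y) \<in> ?T} = fst ` G"
    using assms(3) by force
  ultimately show ?thesis by simp
qed

lemma one_step:
  fixes f :: "nat \<Rightarrow> 'a::euclidean_space \<Rightarrow> 'b::euclidean_space \<Rightarrow> 'a"
  assumes R: "closed R" and Tc: "closed (T t)" and TX: "T t \<subseteq> X"
    and cont: "continuous_on (X \<times> U) (\<lambda>(x, u). f t x u)" and U: "compact U"
  shows "closed {x \<in> T t. \<exists>u\<in>U. \<forall>e\<in>E. f t x u + e \<in> R} \<and>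
    (\<exists>g. g \<in> borel_measurable borel \<and> (\<forall>x \<in> {x \<in> T t. \<exists>u\<in>U. \<forall>e\<in>E. f t x u + e \<in> R}.
       g x \<in> U \<and> (\<forall>e\<in>E. f t x (g x) + e \<in> R)))"
proof -
  define C where "C = (\<Inter>e\<in>E. (\<lambda>z. z + e) -` R)"
  have Cc: "closed C" unfolding C_def
    by (intro closed_INT ballI continuous_closed_vimage R) (auto intro!: continuous_intros)
  define G where "G = (T t \<times> U) \<inter> (\<lambda>p. f t (fst p) (snd p)) -` C"
  have "T t \<times> U \<subseteq> X \<times> U" using TX by auto
  from continuous_on_subset[OF cont this]
  have "continuous_on (T t \<times> U) (\<lambda>p. f t (fst p) (snd p))"
    by (simp add: case_prod_beta')
  hence Gc: "closed G" unfolding G_def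
    by (intro continuous_closed_preimage closed_Times Tc compact_imp_closed U Cc)
  have GU: "G \<subseteq> UNIV \<times> U" unfolding G_def by auto
  have eq: "fst ` G = {x \<in> T t. \<exists>u\<in>U. \<forall>e\<in>E. f t x u + e \<in> R}"
    unfolding G_def C_def by force
  obtain g where g: "g \<in> borel_measurable borel" "\<forall>x \<in> fst ` G. (x, g x) \<in> G"
    using selector[OF Gc U GU] by blast
  show ?thesis
  proof
    show "closed {x \<in> T t. \<exists>u\<in>U. \<forall>e\<in>E. f t x u + e \<in> R}"
      using proj_closed[OF Gc U GU] eq by simp
    show "\<exists>g. g \<in> borel_measurable borel \<and> (\<forall>x \<in> {x \<in> T t. \<exists>u\<in>U. \<forall>e\<in>E. f t x u + e \<in> R}.
       g x \<in> U \<and> (\<forall>e\<in>E. f t x (g x) + e \<in> R))"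
      using g eq unfolding G_def C_def by (intro exI[of _ g]) auto
  qed
qed

lemma Rb_closed:
  fixes f :: "nat \<Rightarrow> 'a::euclidean_space \<Rightarrow> 'b::euclidean_space \<Rightarrow> 'a"
  assumes N: "N > 0" and cont: "\<forall>t<N. continuous_on (X \<times> U) (\<lambda>(x, u). f t x u)"
    and U: "compact U" and TX: "\<forall>t\<le>N. T t \<subseteq> X" and Tc: "\<forall>t\<le>N. closed (T t)"
  shows "closed (Rb f U N T E m)"
proof (induction m)
  case 0
  then show ?case using Tc by simp
next
  case (Suc m)
  have "N - Suc m < N" using N by simp
  then show ?case using one_step[OF Suc, of T "N - Suc m" X U f E] TX Tc cont U by simp
qed

lemma Rb_sel:
  fixes f :: "nat \<Rightarrow> 'a::euclidean_space \<Rightarrow> 'b::euclidean_space \<Rightarrow> 'a"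
  assumes N: "N > 0" and cont: "\<forall>t<N. continuous_on (X \<times> U) (\<lambda>(x, u). f t x u)"
    and U: "compact U" and TX: "\<forall>t\<le>N. T t \<subseteq> X" and Tc: "\<forall>t\<le>N. closed (T t)"
  shows "\<exists>g. g \<in> borel_measurable borel \<and> (\<forall>x\<in>Rb f U N T E (Suc m).
        g x \<in> U \<and> (\<forall>e\<in>E. f (N - Suc m) x (g x) + e \<in> Rb f U N T E m))"
proof -
  have "N - Suc m < N" using N by simp
  then show ?thesis using one_step[OF Rb_closed[OF assms], of T "N - Suc m" X U f E] TX Tc cont U by simp
qed

lemma policy_exists:
  fixes f :: "nat \<Rightarrow> 'a::euclidean_space \<Rightarrow> 'b::euclidean_space \<Rightarrow> 'a"
  assumes N: "N > 0" and cont: "\<forall>t<N. continuous_on (X \<times> U) (\<lambda>(x, u). f t x u)"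
    and U: "compact U" and TX: "\<forall>t\<le>N. T t \<subseteq> X" and Tc: "\<forall>t\<le>N. closed (T t)"
    and u0: "u0 \<in> U"
  shows "\<exists>pol. (\<forall>t. pol t \<in> borel_measurable borel) \<and> (\<forall>t x. pol t x \<in> U) \<and>
     (\<forall>t<N. \<forall>x \<in> Rb f U N T E (N-t). \<forall>e\<in>E. f t x (pol t x) + e \<in> Rb f U N T E (N - Suc t))"
proof -
  have "\<forall>t. \<exists>g. g \<in> borel_measurable borel \<and> (t < N \<longrightarrow> (\<forall>x\<in>Rb f U N T E (N - t).
        g x \<in> U \<and> (\<forall>e\<in>E. f t x (g x) + e \<in> Rb f U N T E (N - Suc t))))"
  proof
    fix t
    show "\<exists>g. g \<in> borel_measurable borel \<and> (t < N \<longrightarrow> (\<forall>x\<in>Rb f U N T E (N - t).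
        g x \<in> U \<and> (\<forall>e\<in>E. f t x (g x) + e \<in> Rb f U N T E (N - Suc t))))"
    proof (cases "t < N")
      case True
      have e1: "N - t = Suc (N - Suc t)" "N - Suc (N - Suc t) = t" using True by auto
      show ?thesis using Rb_sel[OF assms(1-5), of E "N - Suc t"] True unfolding e1 by auto
    next
      case False
      then show ?thesis by (intro exI[of _ "\<lambda>_. u0"]) auto
    qed
  qed
  then obtain G where G: "\<And>t. G t \<in> borel_measurable borel"
    "\<And>t. t < N \<Longrightarrow> \<forall>x\<in>Rb f U N T E (N - t). G t x \<in> U \<and> (\<forall>e\<in>E. f t x (G t x) + e \<in> Rb f U N T E (N - Suc t))"
    by metis
  define pol where "pol t x = (if t < N \<and> x \<in> Rb f U N T E (N - t) then G t x else u0)" for t x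
  have "pol t \<in> borel_measurable borel" for t
  proof (cases "t < N")
    case True
    have c: "closed (Rb f U N T E (N - t))" by (rule Rb_closed[OF assms(1-5)])
    then show ?thesis unfolding pol_def using True
      by (simp, intro measurable_If_set G(1) measurable_const borel_closed c) simp_all
  next
    case False
    hence "pol t = (\<lambda>_. u0)" unfolding pol_def by auto
    then show ?thesis by simp
  qed
  moreover have "pol t x \<in> U" for t x
  proof (cases "t < N")
    case True then show ?thesis using G(2)[OF True] u0 unfolding pol_def by auto
  next
    case False
    then show ?thesis using u0 unfolding pol_def by simp
  qed
  moreover have "\<forall>t<N. \<forall>x \<in> Rb f U N T E (N-t). \<forall>e\<in>E. f t x (pol t x) + e \<in> Rb f U N T E (N - Suc t)"
    using G(2) by (simp add: pol_def)
  ultimately show ?thesis by blast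
qed

lemma traj_inv:
  assumes pol: "\<forall>t<N. \<forall>x \<in> Rb f U N T E (N-t). \<forall>e\<in>E. f t x (pol t x) + e \<in> Rb f U N T E (N - Suc t)"
    and y: "y \<in> Rb f U N T E (N-k)" and w: "\<forall>s\<in>{k..<N}. w s \<in> E"
  shows "j \<le> N-k \<Longrightarrow> traj f pol k y w j \<in> Rb f U N T E (N-(k+j))"
proof (induction j)
  case 0
  then show ?case using y by simp
next
  case (Suc j)
  have t: "k + j < N" "N - (k + Suc j) = N - Suc (k+j)" using Suc.prems by auto
  have "traj f pol k y w j \<in> Rb f U N T E (N - (k+j))" using Suc by simp
  moreover have "w (k+j) \<in> E" using w t by auto
  ultimately show ?case using pol t by simp
qed

lemma traj_agree1:
  assumes ft: "\<forall>t x u. ft t x u = (if x \<in> T t \<and> u \<in> U then f t x u else 0)"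
    and polU: "\<forall>t x. pol t x \<in> U"
  shows "(\<forall>i<j. traj f pol k y w i \<in> T (k+i)) \<Longrightarrow> traj ft pol k y w j = traj f pol k y w j"
  by (induction j) (simp_all add: ft polU)

lemma traj_agree2:
  assumes ft: "\<forall>t x u. ft t x u = (if x \<in> T t \<and> u \<in> U then f t x u else 0)"
    and polU: "\<forall>t x. pol t x \<in> U"
  shows "(\<forall>i<j. traj ft pol k y w i \<in> T (k+i)) \<Longrightarrow> traj ft pol k y w j = traj f pol k y w j"
proof (induction j)
  case (Suc j)
  have IH: "traj ft pol k y w j = traj f pol k y w j" using Suc by simp
  have mem: "traj ft pol k y w j \<in> T (k+j)" using Suc.prems by simp
  have mem': "traj f pol k y w j \<in> T (k+j)" using mem IH by simp
  have "traj ft pol k y w (Suc j) = ft (k+j) (traj ft pol k y w j) (pol (k+j) (traj ft pol k y w j)) + w (k+j)" by simp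
  also have "\<dots> = f (k+j) (traj f pol k y w j) (pol (k+j) (traj f pol k y w j)) + w (k+j)"
    unfolding IH using mem' ft polU by simp
  finally show ?case by simp
qed simp

lemma upto_all:
  fixes tr :: "nat \<Rightarrow> 'a" and k n j :: nat
  assumes "tr 0 \<in> T k" "\<forall>j\<in>{1..n}. tr j \<in> T (k+j)" "j \<le> n"
  shows "\<forall>i<j. tr i \<in> T (k+i)"
proof (intro allI impI)
  fix i assume "i < j"
  show "tr i \<in> T (k+i)"
  proof (cases "i = 0")
    case True then show ?thesis using assms(1) by simp
  next
    case False then show ?thesis using assms(2,3) \<open>i < j\<close> by auto
  qed
qed

lemma traj_meas:
  fixes ft :: "nat \<Rightarrow> 'a::euclidean_space \<Rightarrow> 'b::euclidean_space \<Rightarrow> 'a"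
  assumes ft_m: "\<forall>t<N. (\<lambda>p. ft t (fst p) (snd p)) \<in> borel_measurable borel"
    and pol_m: "\<forall>t. pol t \<in> borel_measurable borel"
    and Pw: "sets Pw = sets borel"
  shows "j \<le> N-k \<Longrightarrow> (\<lambda>\<omega>. traj ft pol k y \<omega> j) \<in> borel_measurable (PiM {k..<N} (\<lambda>_. Pw))"
proof (induction j)
  case 0
  then show ?case by simp
next
  case (Suc j)
  let ?P = "PiM {k..<N} (\<lambda>_. Pw)"
  let ?h = "\<lambda>\<omega>. traj ft pol k y \<omega> j"
  have h[measurable]: "?h \<in> borel_measurable ?P" using Suc by simp
  have pm[measurable]: "pol (k+j) \<in> borel_measurable borel" using pol_m by simp
  have kj: "k + j < N" using Suc.prems by simp
  have "(\<lambda>\<omega>. (?h \<omega>, pol (k+j) (?h \<omega>))) \<in> ?P \<rightarrow>\<^sub>M (borel \<Otimes>\<^sub>M borel)" by measurable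
  hence "(\<lambda>\<omega>. (?h \<omega>, pol (k+j) (?h \<omega>))) \<in> ?P \<rightarrow>\<^sub>M borel" by (simp add: borel_prod)
  from measurable_compose[OF this ft_m[rule_format, OF kj]]
  have A: "(\<lambda>\<omega>. ft (k+j) (?h \<omega>) (pol (k+j) (?h \<omega>))) \<in> borel_measurable ?P" by simp
  have "k + j \<in> {k..<N}" using Suc.prems by auto
  hence "(\<lambda>\<omega>. \<omega> (k+j)) \<in> ?P \<rightarrow>\<^sub>M Pw" by (rule measurable_component_singleton)
  hence B: "(\<lambda>\<omega>. \<omega> (k+j)) \<in> borel_measurable ?P" using measurable_cong_sets[OF refl Pw] by blast
  show ?case using borel_measurable_add[OF A B] by simp
qed

theorem theorem2:
  fixes f :: "nat \<Rightarrow> 'a::euclidean_space \<Rightarrow> 'b::euclidean_space \<Rightarrow> 'a"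
    and X W E :: "'a set" and U :: "'b set" and T :: "nat \<Rightarrow> 'a set"
    and Pw :: "'a measure" and N k :: nat and \<alpha> :: real
  assumes "N > 0"
    and "\<forall>t<N. \<forall>x\<in>X. \<forall>u\<in>U. f t x u \<in> X"
    and "\<forall>t<N. continuous_on (X \<times> U) (\<lambda>(x, u). f t x u)"
    and "compact U"
    and "0 \<in> W"
    and "prob_space Pw" and "sets Pw = sets borel"
    and "absolutely_continuous lborel Pw"
    and "AE w in Pw. w \<in> W"
    and "\<forall>t\<le>N. T t \<subseteq> X" and "\<forall>t\<le>N. closed (T t)"
    and "0 \<le> \<alpha>" and "\<alpha> \<le> 1" and "k < N"
    and "E \<subseteq> W" and "E \<in> sets borel"
    and "measure Pw E = \<alpha> powr (1 / real (N - k))"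
  shows "min_reach_set f X U N T E k \<subseteq> stoch_reach_set f X U N T Pw k \<alpha>"
proof
  note N = assms(1) and cont = assms(3) and U = assms(4) and Pwp = assms(6) and Pws = assms(7)
    and TX = assms(10) and Tc = assms(11) and a0 = assms(12) and kN = assms(14)
    and Eb = assms(16) and mE = assms(17)
  fix y assume "y \<in> min_reach_set f X U N T E k"
  then obtain \<nu> where yT: "y \<in> T k" and \<nu>U: "\<forall>t\<in>{k..<N}. \<forall>z\<in>X. \<nu> t z \<in> U"
    and \<nu>: "\<forall>w. (\<forall>t\<in>{k..<N}. w t \<in> E) \<longrightarrow> (\<forall>j\<in>{1..N-k}. traj f \<nu> k y w j \<in> T (k + j))"
    using kN unfolding min_reach_set_def by auto
  have yX: "y \<in> X" using yT TX kN less_imp_le by blast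
  have u0: "\<nu> k y \<in> U" using \<nu>U yX kN by auto
  have e1: "N - (N - k) = k" using kN by simp
  have yR: "y \<in> Rb f U N T E (N - k)"
    using minreach_Rb[OF TX, of "N-k" y \<nu> U E f] yT \<nu>U \<nu> unfolding e1 by simp
  obtain pol where pol_m: "\<forall>t. pol t \<in> borel_measurable borel" and polU: "\<forall>t x. pol t x \<in> U"
    and pol: "\<forall>t<N. \<forall>x \<in> Rb f U N T E (N-t). \<forall>e\<in>E. f t x (pol t x) + e \<in> Rb f U N T E (N - Suc t)"
    using policy_exists[OF N cont U TX Tc u0, of E] by blast
  have polM: "pol \<in> markov_policies N X U"
    unfolding markov_policies_def univ_measurable_on_def
  proof (intro CollectI allI impI conjI ballI)
    fix t M assume "prob_space M" "sets M = sets (restrict_space borel X)"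
    have "pol t \<in> restrict_space borel X \<rightarrow>\<^sub>M borel"
      using pol_m by (intro measurable_restrict_space1) simp
    hence "pol t \<in> M \<rightarrow>\<^sub>M borel" using measurable_cong_sets[OF \<open>sets M = _\<close> refl] by blast
    then show "pol t \<in> completion M \<rightarrow>\<^sub>M borel" by (rule measurable_completion)
  qed (use polU in auto)
  define P where "P = PiM {k..<N} (\<lambda>_. Pw)"
  interpret P: prob_space P unfolding P_def by (intro prob_space_PiM Pwp)
  interpret PS: product_sigma_finite "\<lambda>_. Pw"
    unfolding product_sigma_finite_def using Pwp by (simp add: prob_space_imp_sigma_finite)
  define S where "S = {\<omega> \<in> space P. \<forall>j\<in>{1..N-k}. traj f pol k y \<omega> j \<in> T (k + j)}"
  define ft where "ft t x u = (if x \<in> T t \<and> u \<in> U then f t x u else 0)" for t x u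
  have ft_eq: "\<forall>t x u. ft t x u = (if x \<in> T t \<and> u \<in> U then f t x u else 0)" by (simp add: ft_def)
  have ft_m: "\<forall>t<N. (\<lambda>p. ft t (fst p) (snd p)) \<in> borel_measurable borel"
  proof (intro allI impI)
    fix t assume t: "t < N"
    have "T t \<subseteq> X" using TX t by simp
    hence "T t \<times> U \<subseteq> X \<times> U" by auto
    from continuous_on_subset[OF cont[rule_format, OF t] this]
    have c: "continuous_on (T t \<times> U) (\<lambda>p. f t (fst p) (snd p))"
      by (simp add: case_prod_beta')
    have cl: "closed (T t \<times> U)" using Tc t by (intro closed_Times compact_imp_closed[OF U]) auto
    have "(\<lambda>p. if p \<in> T t \<times> U then f t (fst p) (snd p) else 0) \<in> borel_measurable borel"
      by (intro borel_measurable_continuous_on_if borel_closed cl c continuous_on_const)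
    moreover have "(\<lambda>p. ft t (fst p) (snd p)) = (\<lambda>p. if p \<in> T t \<times> U then f t (fst p) (snd p) else 0)"
      by (auto simp: ft_def mem_Times_iff)
    ultimately show "(\<lambda>p. ft t (fst p) (snd p)) \<in> borel_measurable borel" by simp
  qed
  define S' where "S' = {\<omega> \<in> space P. \<forall>j\<in>{1..N-k}. traj ft pol k y \<omega> j \<in> T (k + j)}"
  have SS': "S = S'"
  proof -
    have "(\<forall>j\<in>{1..N-k}. traj f pol k y \<omega> j \<in> T (k + j)) \<longleftrightarrow> (\<forall>j\<in>{1..N-k}. traj ft pol k y \<omega> j \<in> T (k + j))" for \<omega>
    proof
      assume A: "\<forall>j\<in>{1..N-k}. traj f pol k y \<omega> j \<in> T (k + j)"
      show "\<forall>j\<in>{1..N-k}. traj ft pol k y \<omega> j \<in> T (k + j)"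
      proof
        fix j assume j: "j \<in> {1..N-k}"
        have "\<forall>i<j. traj f pol k y \<omega> i \<in> T (k+i)"
          by (rule upto_all[of "traj f pol k y \<omega>" T k "N-k"]) (use yT A j in auto)
        then show "traj ft pol k y \<omega> j \<in> T (k + j)" using traj_agree1[OF ft_eq polU] A j by metis
      qed
    next
      assume A: "\<forall>j\<in>{1..N-k}. traj ft pol k y \<omega> j \<in> T (k + j)"
      show "\<forall>j\<in>{1..N-k}. traj f pol k y \<omega> j \<in> T (k + j)"
      proof
        fix j assume j: "j \<in> {1..N-k}"
        have "\<forall>i<j. traj ft pol k y \<omega> i \<in> T (k+i)"
          by (rule upto_all[of "traj ft pol k y \<omega>" T k "N-k"]) (use yT A j in auto)
        then show "traj f pol k y \<omega> j \<in> T (k + j)" using traj_agree2[OF ft_eq polU] A j by metis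
      qed
    qed
    then show ?thesis unfolding S_def S'_def by auto
  qed
  have S'm: "S' \<in> sets P"
  proof -
    have "Measurable.pred P (\<lambda>\<omega>. \<forall>j\<in>{1..N-k}. traj ft pol k y \<omega> j \<in> T (k + j))"
    proof (rule pred_intros_finite)
      fix j assume j: "j \<in> {1..N-k}"
      have [measurable]: "(\<lambda>\<omega>. traj ft pol k y \<omega> j) \<in> borel_measurable P"
        unfolding P_def using j by (intro traj_meas[OF ft_m pol_m Pws]) auto
      have [measurable]: "T (k+j) \<in> sets borel" using Tc j by (intro borel_closed) auto
      show "Measurable.pred P (\<lambda>\<omega>. traj ft pol k y \<omega> j \<in> T (k + j))" by measurable
    qed simp
    then show ?thesis unfolding S'_def pred_def by simp
  qed
  define B where "B = PiE {k..<N} (\<lambda>_. E)"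
  have spw: "space Pw = UNIV" using sets_eq_imp_space_eq[OF Pws] by simp
  have BS: "B \<subseteq> S"
  proof
    fix \<omega> assume w: "\<omega> \<in> B"
    have "\<omega> \<in> space P" using w unfolding B_def P_def space_PiM spw by (auto simp: PiE_def Pi_def)
    moreover have "\<forall>s\<in>{k..<N}. \<omega> s \<in> E" using w unfolding B_def by auto
    hence "\<forall>j\<in>{1..N-k}. traj f pol k y \<omega> j \<in> T (k + j)"
    proof (intro ballI)
      fix j assume wE: "\<forall>s\<in>{k..<N}. \<omega> s \<in> E" and j: "j \<in> {1..N-k}"
      have "traj f pol k y \<omega> j \<in> Rb f U N T E (N-(k+j))"
        using traj_inv[OF pol yR wE] j by auto
      moreover have "N - (N - (k+j)) = k + j" using j by auto
      ultimately show "traj f pol k y \<omega> j \<in> T (k + j)" using Rb_sub[of f U N T E "N-(k+j)"] by auto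
    qed
    ultimately show "\<omega> \<in> S" unfolding S_def by simp
  qed
  have mB: "measure P B = \<alpha>"
  proof (rule measure_eq_emeasure_eq_ennreal[OF a0])
    have "emeasure P B = (\<Prod>i\<in>{k..<N}. emeasure Pw E)"
      unfolding P_def B_def using Eb Pws by (intro PS.emeasure_PiM) auto
    also have "\<dots> = (\<Prod>i\<in>{k..<N}. ennreal (measure Pw E))"
      using finite_measure.emeasure_eq_measure[OF prob_space.finite_measure[OF Pwp]] by simp
    also have "\<dots> = ennreal ((measure Pw E) ^ (N - k))"
      by (simp add: ennreal_power)
    also have "(measure Pw E) ^ (N - k) = \<alpha>"
    proof (cases "\<alpha> = 0")
      case True
      then show ?thesis using mE kN by simp
    next
      case False
      hence ap: "\<alpha> > 0" using a0 by simp
      have "(\<alpha> powr (1 / real (N - k))) ^ (N - k) = (\<alpha> powr (1 / real (N - k))) powr real (N - k)"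
        using ap by (simp add: powr_realpow)
      also have "\<dots> = \<alpha>" using kN ap by (simp add: powr_powr)
      finally show ?thesis using mE by simp
    qed
    finally show "emeasure P B = ennreal \<alpha>" .
  qed
  have "reach_prob f pol N T Pw k y = measure P S"
    unfolding reach_prob_def P_def[symmetric] S_def[symmetric] using S'm SS' by simp
  also have "\<dots> \<ge> measure P B" using BS S'm SS' by (intro P.finite_measure_mono) auto
  finally have rp: "reach_prob f pol N T Pw k y \<ge> \<alpha>" using mB by simp
  have bdd: "bdd_above ((\<lambda>pol. reach_prob f pol N T Pw k y) ` markov_policies N X U)"
  proof (rule bdd_aboveI)
    fix r assume "r \<in> (\<lambda>pol. reach_prob f pol N T Pw k y) ` markov_policies N X U"
    then obtain p where "r = reach_prob f p N T Pw k y" by auto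
    then show "r \<le> 1" unfolding reach_prob_def P_def[symmetric]
      using prob_space.prob_le_1[OF P.prob_space_completion] by simp
  qed
  have "\<alpha> \<le> (SUP pol\<in>markov_policies N X U. reach_prob f pol N T Pw k y)"
    using cSUP_upper2[OF bdd polM] rp by blast
  then show "y \<in> stoch_reach_set f X U N T Pw k \<alpha>" unfolding stoch_reach_set_def using yT by simp
qed

end
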